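(* The number of pairwise nonequivalent regular graphical Hadamard matrices of order $4^m$ is unbounded as $m\to\infty$.
   Context: A Hadamard matrix of order $n$ is an $n\times n$ matrix $H$ with entries $\pm1$ such that $HH^{\top}=nI$. It is graphical if it is symmetric with constant diagonal, and regular if all its row sums and column sums are equal. Two Hadamard matrices are equivalent if one can be obtained from the other by permuting rows, permuting columns, and multiplying rows and columns by $-1$. *)

theory Defs
  imports Main
begin

text \<open>An n x n matrix is represented as a function nat => nat => int,
  only the entries with indices in {..<n} being relevant.\<close>

definition hadamard :: "nat \<Rightarrow> (nat \<Rightarrow> nat \<Rightarrow> int) \<Rightarrow> bool" where
  "hadamard n H \<longleftrightarrow>
     (\<forall>i<n. \<forall>j<n. H i j = 1 \<or> H i j = -1) \<and>
     (\<forall>i<n. \<forall>k<n. (\<Sum>j<n. H i j * H k j) = (if i = k then int n else 0))"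

definition graphical :: "nat \<Rightarrow> (nat \<Rightarrow> nat \<Rightarrow> int) \<Rightarrow> bool" where
  "graphical n H \<longleftrightarrow>
     (\<forall>i<n. \<forall>j<n. H i j = H j i) \<and> (\<forall>i<n. \<forall>j<n. H i i = H j j)"

definition regular :: "nat \<Rightarrow> (nat \<Rightarrow> nat \<Rightarrow> int) \<Rightarrow> bool" where
  "regular n H \<longleftrightarrow>
     (\<exists>s. (\<forall>i<n. (\<Sum>j<n. H i j) = s) \<and> (\<forall>j<n. (\<Sum>i<n. H i j) = s))"

definition hadamard_equiv :: "nat \<Rightarrow> (nat \<Rightarrow> nat \<Rightarrow> int) \<Rightarrow> (nat \<Rightarrow> nat \<Rightarrow> int) \<Rightarrow> bool" where
  "hadamard_equiv n H K \<longleftrightarrow>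
     (\<exists>\<sigma> \<tau> r c. bij_betw \<sigma> {..<n} {..<n} \<and> bij_betw \<tau> {..<n} {..<n} \<and>
        (\<forall>i<n. r i = 1 \<or> r i = (-1::int)) \<and> (\<forall>j<n. c j = 1 \<or> c j = (-1::int)) \<and>
        (\<forall>i<n. \<forall>j<n. K i j = r i * c j * H (\<sigma> i) (\<tau> j)))"

end

theory Submission imports Defs begin

lemma split_sum:
  fixes g :: "nat \<Rightarrow> nat \<Rightarrow> 'a::comm_monoid_add"
  assumes "0 < k"
  shows "(\<Sum>i<n*k. g (i div k) (i mod k)) = (\<Sum>a<n. \<Sum>b<k. g a b)"
proof -
  have "(\<Sum>i<n*k. g (i div k) (i mod k)) = (\<Sum>a<n. \<Sum>i\<in>{a*k..<a*k+k}. g (i div k) (i mod k))"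
    by (rule sum.nat_group[symmetric])
  also have "\<dots> = (\<Sum>a<n. \<Sum>b<k. g a b)"
  proof (rule sum.cong[OF refl])
    fix a
    have "(\<Sum>i\<in>{a*k..<a*k+k}. g (i div k) (i mod k)) = (\<Sum>b\<in>{0..<k}. g ((b + a*k) div k) ((b+a*k) mod k))"
      using sum.shift_bounds_nat_ivl[of "\<lambda>i. g (i div k) (i mod k)" 0 "a*k" k] by (simp add: add.commute)
    also have "\<dots> = (\<Sum>b<k. g a b)"
      by (rule sum.cong) (use assms in auto)
    finally show "(\<Sum>i\<in>{a*k..<a*k+k}. g (i div k) (i mod k)) = (\<Sum>b<k. g a b)" .
  qed
  finally show ?thesis .
qed

lemma split_prod:
  fixes f h :: "nat \<Rightarrow> 'a::comm_semiring_1"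
  assumes "0 < k"
  shows "(\<Sum>i<n*k. f (i div k) * h (i mod k)) = (\<Sum>a<n. f a) * (\<Sum>b<k. h b)"
  using split_sum[OF assms, of "\<lambda>a b. f a * h b" n] by (simp add: sum_product)

definition kron :: "nat \<Rightarrow> (nat\<Rightarrow>nat\<Rightarrow>int) \<Rightarrow> (nat\<Rightarrow>nat\<Rightarrow>int) \<Rightarrow> nat\<Rightarrow>nat\<Rightarrow>int" where
 "kron n2 A B i j = A (i div n2) (j div n2) * B (i mod n2) (j mod n2)"

lemma div_bound: "i < n1*n2 \<Longrightarrow> i div n2 < (n1::nat)"
  by (cases "n2 = 0") (auto simp: div_less_iff_less_mult)

lemma mod_bound: "i < n1*n2 \<Longrightarrow> i mod (n2::nat) < n2"
  by (cases "n2 = 0") auto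

lemma pm1_mult: "(x::int) = 1 \<or> x = -1 \<Longrightarrow> y = 1 \<or> y = -1 \<Longrightarrow> x*y = 1 \<or> x*y = -1"
  by auto

lemma kron_hadamard:
  assumes A: "hadamard n1 A" and B: "hadamard n2 B" and k: "0 < n2"
  shows "hadamard (n1*n2) (kron n2 A B)"
  unfolding hadamard_def
proof (intro conjI allI impI)
  fix i j assume i: "i < n1*n2" and j: "j < n1*n2"
  show "kron n2 A B i j = 1 \<or> kron n2 A B i j = -1"
    unfolding kron_def
    using A B div_bound[OF i] div_bound[OF j] mod_bound[OF i] mod_bound[OF j]
    unfolding hadamard_def by (intro pm1_mult) auto
next
  fix i k assume i: "i < n1*n2" and kk: "k < n1*n2"
  have "(\<Sum>j<n1*n2. kron n2 A B i j * kron n2 A B k j)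
      = (\<Sum>j<n1*n2. (A (i div n2) (j div n2) * A (k div n2) (j div n2)) * (B (i mod n2) (j mod n2) * B (k mod n2) (j mod n2)))"
    unfolding kron_def by (simp add: algebra_simps)
  also have "\<dots> = (\<Sum>a<n1. A (i div n2) a * A (k div n2) a) * (\<Sum>b<n2. B (i mod n2) b * B (k mod n2) b)"
    by (rule split_prod[OF k])
  also have "\<dots> = (if i div n2 = k div n2 then int n1 else 0) * (if i mod n2 = k mod n2 then int n2 else 0)"
    using A B div_bound[OF i] div_bound[OF kk] mod_bound[OF i] mod_bound[OF kk]
    unfolding hadamard_def by simp
  also have "\<dots> = (if i = k then int (n1*n2) else 0)"
  proof (cases "i = k")
    case True then show ?thesis by simp
  next
    case False
    then have "i div n2 \<noteq> k div n2 \<or> i mod n2 \<noteq> k mod n2" by (metis div_mult_mod_eq)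
    then show ?thesis using False by auto
  qed
  finally show "(\<Sum>j<n1*n2. kron n2 A B i j * kron n2 A B k j) = (if i = k then int (n1*n2) else 0)" .
qed

lemma kron_graphical:
  assumes A: "graphical n1 A" and B: "graphical n2 B"
  shows "graphical (n1*n2) (kron n2 A B)"
  unfolding graphical_def
proof (intro conjI allI impI)
  fix i j assume i: "i < n1*n2" and j: "j < n1*n2"
  show "kron n2 A B i j = kron n2 A B j i"
    unfolding kron_def
    using A B div_bound[OF i] div_bound[OF j] mod_bound[OF i] mod_bound[OF j]
    unfolding graphical_def by auto
next
  fix i j assume i: "i < n1*n2" and j: "j < n1*n2"
  show "kron n2 A B i i = kron n2 A B j j"
  proof -
    have "A (i div n2) (i div n2) = A (j div n2) (j div n2)"
      using A div_bound[OF i] div_bound[OF j] unfolding graphical_def by blast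
    moreover have "B (i mod n2) (i mod n2) = B (j mod n2) (j mod n2)"
      using B mod_bound[OF i] mod_bound[OF j] unfolding graphical_def by blast
    ultimately show ?thesis by (simp add: kron_def)
  qed
qed

lemma kron_regular:
  assumes A: "regular n1 A" and B: "regular n2 B" and k: "0 < n2"
  shows "regular (n1*n2) (kron n2 A B)"
proof -
  obtain s1 where s1: "\<forall>i<n1. (\<Sum>j<n1. A i j) = s1" "\<forall>j<n1. (\<Sum>i<n1. A i j) = s1"
    using A unfolding regular_def by blast
  obtain s2 where s2: "\<forall>i<n2. (\<Sum>j<n2. B i j) = s2" "\<forall>j<n2. (\<Sum>i<n2. B i j) = s2"
    using B unfolding regular_def by blast
  show ?thesis unfolding regular_def
  proof (intro exI[of _ "s1*s2"] conjI allI impI)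
    fix i assume i: "i < n1*n2"
    have "(\<Sum>j<n1*n2. kron n2 A B i j) = (\<Sum>a<n1. A (i div n2) a) * (\<Sum>b<n2. B (i mod n2) b)"
      unfolding kron_def by (rule split_prod[OF k])
    then show "(\<Sum>j<n1*n2. kron n2 A B i j) = s1*s2"
      using s1 s2 div_bound[OF i] mod_bound[OF i] by simp
  next
    fix j assume j: "j < n1*n2"
    have "(\<Sum>i<n1*n2. kron n2 A B i j) = (\<Sum>a<n1. A a (j div n2)) * (\<Sum>b<n2. B b (j mod n2))"
      unfolding kron_def by (rule split_prod[OF k])
    then show "(\<Sum>i<n1*n2. kron n2 A B i j) = s1*s2"
      using s1 s2 div_bound[OF j] mod_bound[OF j] by simp
  qed
qed

definition ind :: "nat \<Rightarrow> (nat\<Rightarrow>nat\<Rightarrow>int) \<Rightarrow> nat\<Rightarrow>nat\<Rightarrow>nat\<Rightarrow>nat\<Rightarrow>nat" where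
 "ind n H a b c d = (if \<bar>\<Sum>j<n. H a j * H b j * H c j * H d j\<bar> = int n then 1 else 0)"

definition fourc :: "nat \<Rightarrow> (nat\<Rightarrow>nat\<Rightarrow>int) \<Rightarrow> nat" where
 "fourc n H = (\<Sum>a<n. \<Sum>b<n. \<Sum>c<n. \<Sum>d<n. ind n H a b c d)"

lemma abs_sum_le:
  assumes "\<forall>j<n. w j = 1 \<or> w j = (-1::int)"
  shows "\<bar>\<Sum>j<n. w j\<bar> \<le> int n"
proof -
  have "\<bar>\<Sum>j<n. w j\<bar> \<le> (\<Sum>j<n. \<bar>w j\<bar>)" by (rule sum_abs)
  also have "\<dots> = (\<Sum>j<n. 1)" using assms by (intro sum.cong) auto
  finally show ?thesis by simp
qed

lemma abs_prod_eq:
  fixes x y :: int and n1 n2 :: nat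
  assumes "\<bar>x\<bar> \<le> int n1" "\<bar>y\<bar> \<le> int n2" "0 < n1" "0 < n2"
  shows "(\<bar>x*y\<bar> = int (n1*n2)) = (\<bar>x\<bar> = int n1 \<and> \<bar>y\<bar> = int n2)"
proof
  assume h: "\<bar>x*y\<bar> = int (n1*n2)"
  have e: "\<bar>x\<bar>*\<bar>y\<bar> = int n1 * int n2" using h by (simp add: abs_mult)
  show "\<bar>x\<bar> = int n1 \<and> \<bar>y\<bar> = int n2"
  proof (rule ccontr)
    assume "\<not> (\<bar>x\<bar> = int n1 \<and> \<bar>y\<bar> = int n2)"
    then have "\<bar>x\<bar> < int n1 \<or> \<bar>y\<bar> < int n2" using assms by auto
    then have "\<bar>x\<bar>*\<bar>y\<bar> < int n1 * int n2"
    proof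
      assume "\<bar>x\<bar> < int n1"
      then have "\<bar>x\<bar>*\<bar>y\<bar> \<le> \<bar>x\<bar> * int n2" using assms by (simp add: mult_left_mono)
      also have "\<dots> < int n1 * int n2" using \<open>\<bar>x\<bar> < int n1\<close> assms by (simp add: mult_strict_right_mono)
      finally show ?thesis .
    next
      assume "\<bar>y\<bar> < int n2"
      then have "\<bar>x\<bar>*\<bar>y\<bar> \<le> int n1 * \<bar>y\<bar>" using assms by (simp add: mult_right_mono)
      also have "\<dots> < int n1 * int n2" using \<open>\<bar>y\<bar> < int n2\<close> assms by (simp add: mult_strict_left_mono)
      finally show ?thesis .
    qed
    then show False using e by simp
  qed
next
  assume "\<bar>x\<bar> = int n1 \<and> \<bar>y\<bar> = int n2"
  then show "\<bar>x*y\<bar> = int (n1*n2)" by (simp add: abs_mult)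
qed

lemma ind_kron:
  assumes A: "hadamard n1 A" and B: "hadamard n2 B" and k1: "0 < n1" and k: "0 < n2"
    and a: "a < n1*n2" and b: "b < n1*n2" and c: "c < n1*n2" and d: "d < n1*n2"
  shows "ind (n1*n2) (kron n2 A B) a b c d
       = ind n1 A (a div n2) (b div n2) (c div n2) (d div n2) * ind n2 B (a mod n2) (b mod n2) (c mod n2) (d mod n2)"
proof -
  let ?a = "a div n2" and ?b = "b div n2" and ?c = "c div n2" and ?d = "d div n2"
  let ?a' = "a mod n2" and ?b' = "b mod n2" and ?c' = "c mod n2" and ?d' = "d mod n2"
  have "(\<Sum>j<n1*n2. kron n2 A B a j * kron n2 A B b j * kron n2 A B c j * kron n2 A B d j)
     = (\<Sum>j<n1*n2. (A ?a (j div n2) * A ?b (j div n2) * A ?c (j div n2) * A ?d (j div n2))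
           * (B ?a' (j mod n2) * B ?b' (j mod n2) * B ?c' (j mod n2) * B ?d' (j mod n2)))"
    unfolding kron_def by (simp add: algebra_simps)
  also have "\<dots> = (\<Sum>j<n1. A ?a j * A ?b j * A ?c j * A ?d j) * (\<Sum>j<n2. B ?a' j * B ?b' j * B ?c' j * B ?d' j)"
    by (rule split_prod[OF k])
  finally have e: "(\<Sum>j<n1*n2. kron n2 A B a j * kron n2 A B b j * kron n2 A B c j * kron n2 A B d j)
     = (\<Sum>j<n1. A ?a j * A ?b j * A ?c j * A ?d j) * (\<Sum>j<n2. B ?a' j * B ?b' j * B ?c' j * B ?d' j)" .
  have bA: "\<bar>\<Sum>j<n1. A ?a j * A ?b j * A ?c j * A ?d j\<bar> \<le> int n1"
    apply (rule abs_sum_le)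
    using A div_bound[OF a] div_bound[OF b] div_bound[OF c] div_bound[OF d]
    unfolding hadamard_def by (intro allI impI pm1_mult) auto
  have bB: "\<bar>\<Sum>j<n2. B ?a' j * B ?b' j * B ?c' j * B ?d' j\<bar> \<le> int n2"
    apply (rule abs_sum_le)
    using B mod_bound[OF a] mod_bound[OF b] mod_bound[OF c] mod_bound[OF d]
    unfolding hadamard_def by (intro allI impI pm1_mult) auto
  show ?thesis
    unfolding ind_def e abs_prod_eq[OF bA bB k1 k] by simp
qed

lemma fourc_kron:
  assumes A: "hadamard n1 A" and B: "hadamard n2 B" and k1: "0 < n1" and k: "0 < n2"
  shows "fourc (n1*n2) (kron n2 A B) = fourc n1 A * fourc n2 B"
proof -
  let ?N = "n1*n2"
  let ?IA = "ind n1 A" and ?IB = "ind n2 B"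
  have s1: "(\<Sum>d<?N. ind ?N (kron n2 A B) a b c d)
     = (\<Sum>d<n1. ?IA (a div n2) (b div n2) (c div n2) d) * (\<Sum>d<n2. ?IB (a mod n2) (b mod n2) (c mod n2) d)"
    if "a < ?N" "b < ?N" "c < ?N" for a b c
  proof -
    have "(\<Sum>d<?N. ind ?N (kron n2 A B) a b c d)
       = (\<Sum>d<?N. ?IA (a div n2) (b div n2) (c div n2) (d div n2) * ?IB (a mod n2) (b mod n2) (c mod n2) (d mod n2))"
      by (rule sum.cong[OF refl], rule ind_kron[OF A B k1 k that]) simp
    also have "\<dots> = (\<Sum>d<n1. ?IA (a div n2) (b div n2) (c div n2) d) * (\<Sum>d<n2. ?IB (a mod n2) (b mod n2) (c mod n2) d)"
      by (rule split_prod[OF k])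
    finally show ?thesis .
  qed
  have s2: "(\<Sum>c<?N. \<Sum>d<?N. ind ?N (kron n2 A B) a b c d)
     = (\<Sum>c<n1. \<Sum>d<n1. ?IA (a div n2) (b div n2) c d) * (\<Sum>c<n2. \<Sum>d<n2. ?IB (a mod n2) (b mod n2) c d)"
    if "a < ?N" "b < ?N" for a b
  proof -
    have "(\<Sum>c<?N. \<Sum>d<?N. ind ?N (kron n2 A B) a b c d)
       = (\<Sum>c<?N. (\<Sum>d<n1. ?IA (a div n2) (b div n2) (c div n2) d) * (\<Sum>d<n2. ?IB (a mod n2) (b mod n2) (c mod n2) d))"
      by (rule sum.cong[OF refl], rule s1[OF that]) simp
    also have "\<dots> = (\<Sum>c<n1. \<Sum>d<n1. ?IA (a div n2) (b div n2) c d) * (\<Sum>c<n2. \<Sum>d<n2. ?IB (a mod n2) (b mod n2) c d)"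
      by (rule split_prod[OF k])
    finally show ?thesis .
  qed
  have s3: "(\<Sum>b<?N. \<Sum>c<?N. \<Sum>d<?N. ind ?N (kron n2 A B) a b c d)
     = (\<Sum>b<n1. \<Sum>c<n1. \<Sum>d<n1. ?IA (a div n2) b c d) * (\<Sum>b<n2. \<Sum>c<n2. \<Sum>d<n2. ?IB (a mod n2) b c d)"
    if "a < ?N" for a
  proof -
    have "(\<Sum>b<?N. \<Sum>c<?N. \<Sum>d<?N. ind ?N (kron n2 A B) a b c d)
       = (\<Sum>b<?N. (\<Sum>c<n1. \<Sum>d<n1. ?IA (a div n2) (b div n2) c d) * (\<Sum>c<n2. \<Sum>d<n2. ?IB (a mod n2) (b mod n2) c d))"
      by (rule sum.cong[OF refl], rule s2[OF that]) simp
    also have "\<dots> = (\<Sum>b<n1. \<Sum>c<n1. \<Sum>d<n1. ?IA (a div n2) b c d) * (\<Sum>b<n2. \<Sum>c<n2. \<Sum>d<n2. ?IB (a mod n2) b c d)"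
      by (rule split_prod[OF k])
    finally show ?thesis .
  qed
  have "fourc ?N (kron n2 A B)
       = (\<Sum>a<?N. (\<Sum>b<n1. \<Sum>c<n1. \<Sum>d<n1. ?IA (a div n2) b c d) * (\<Sum>b<n2. \<Sum>c<n2. \<Sum>d<n2. ?IB (a mod n2) b c d))"
    unfolding fourc_def by (rule sum.cong[OF refl], rule s3) simp
  also have "\<dots> = fourc n1 A * fourc n2 B"
    unfolding fourc_def by (rule split_prod[OF k])
  finally show ?thesis .
qed

lemma ind_equiv:
  assumes s: "bij_betw \<sigma> {..<n} {..<n}" and t: "bij_betw \<tau> {..<n} {..<n}"
    and r: "\<forall>i<n. r i = 1 \<or> r i = (-1::int)" and c: "\<forall>j<n. c j = 1 \<or> c j = (-1::int)"
    and K: "\<forall>i<n. \<forall>j<n. K i j = r i * c j * H (\<sigma> i) (\<tau> j)"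
    and a: "a < n" and b: "b < n" and cc: "cc < n" and d: "d < n"
  shows "ind n K a b cc d = ind n H (\<sigma> a) (\<sigma> b) (\<sigma> cc) (\<sigma> d)"
proof -
  have "(\<Sum>j<n. K a j * K b j * K cc j * K d j)
      = (\<Sum>j<n. (r a * r b * r cc * r d) * (H (\<sigma> a) (\<tau> j) * H (\<sigma> b) (\<tau> j) * H (\<sigma> cc) (\<tau> j) * H (\<sigma> d) (\<tau> j)))"
  proof (rule sum.cong[OF refl])
    fix j assume "j \<in> {..<n}"
    then have j: "j < n" by simp
    have cj: "c j * c j * c j * c j = 1" using c j by auto
    have "K a j * K b j * K cc j * K d j
       = (r a * r b * r cc * r d) * (c j * c j * c j * c j) * (H (\<sigma> a) (\<tau> j) * H (\<sigma> b) (\<tau> j) * H (\<sigma> cc) (\<tau> j) * H (\<sigma> d) (\<tau> j))"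
      using K a b cc d j by (simp add: algebra_simps)
    then show "K a j * K b j * K cc j * K d j
       = (r a * r b * r cc * r d) * (H (\<sigma> a) (\<tau> j) * H (\<sigma> b) (\<tau> j) * H (\<sigma> cc) (\<tau> j) * H (\<sigma> d) (\<tau> j))"
      using cj by simp
  qed
  also have "\<dots> = (r a * r b * r cc * r d) * (\<Sum>j<n. H (\<sigma> a) (\<tau> j) * H (\<sigma> b) (\<tau> j) * H (\<sigma> cc) (\<tau> j) * H (\<sigma> d) (\<tau> j))"
    by (simp add: sum_distrib_left)
  also have "(\<Sum>j<n. H (\<sigma> a) (\<tau> j) * H (\<sigma> b) (\<tau> j) * H (\<sigma> cc) (\<tau> j) * H (\<sigma> d) (\<tau> j))
      = (\<Sum>j<n. H (\<sigma> a) j * H (\<sigma> b) j * H (\<sigma> cc) j * H (\<sigma> d) j)"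
    using sum.reindex_bij_betw[OF t, of "\<lambda>j. H (\<sigma> a) j * H (\<sigma> b) j * H (\<sigma> cc) j * H (\<sigma> d) j"] by simp
  finally have e: "(\<Sum>j<n. K a j * K b j * K cc j * K d j)
     = (r a * r b * r cc * r d) * (\<Sum>j<n. H (\<sigma> a) j * H (\<sigma> b) j * H (\<sigma> cc) j * H (\<sigma> d) j)" .
  have "\<bar>r x\<bar> = 1" if "x < n" for x using r that by auto
  then have "\<bar>r a * r b * r cc * r d\<bar> = 1" using a b cc d by (simp add: abs_mult)
  then show ?thesis unfolding ind_def e by (simp add: abs_mult)
qed

lemma fourc_equiv:
  assumes "hadamard_equiv n H K"
  shows "fourc n K = fourc n H"
proof -
  obtain \<sigma> \<tau> r c where s: "bij_betw \<sigma> {..<n} {..<n}" and t: "bij_betw \<tau> {..<n} {..<n}"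
    and r: "\<forall>i<n. r i = 1 \<or> r i = (-1::int)" and c: "\<forall>j<n. c j = 1 \<or> c j = (-1::int)"
    and K: "\<forall>i<n. \<forall>j<n. K i j = r i * c j * H (\<sigma> i) (\<tau> j)"
    using assms unfolding hadamard_equiv_def by blast
  let ?I = "ind n H"
  have rx: "\<And>g. (\<Sum>x<n. g (\<sigma> x)) = (\<Sum>x<n. g x)"
    using sum.reindex_bij_betw[OF s] by simp
  have "fourc n K = (\<Sum>a<n. \<Sum>b<n. \<Sum>cc<n. \<Sum>d<n. ?I (\<sigma> a) (\<sigma> b) (\<sigma> cc) (\<sigma> d))"
    unfolding fourc_def
    by (intro sum.cong refl) (simp add: ind_equiv[OF s t r c K])
  also have "\<dots> = (\<Sum>a<n. \<Sum>b<n. \<Sum>cc<n. \<Sum>d<n. ?I (\<sigma> a) (\<sigma> b) (\<sigma> cc) d)"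
    by (simp only: rx)
  also have "\<dots> = (\<Sum>a<n. \<Sum>b<n. \<Sum>cc<n. \<Sum>d<n. ?I (\<sigma> a) (\<sigma> b) cc d)"
    by (simp only: rx[of "\<lambda>x. \<Sum>d<n. ?I _ _ x d"])
  also have "\<dots> = (\<Sum>a<n. \<Sum>b<n. \<Sum>cc<n. \<Sum>d<n. ?I (\<sigma> a) b cc d)"
    by (simp only: rx[of "\<lambda>x. \<Sum>cc<n. \<Sum>d<n. ?I _ x cc d"])
  also have "\<dots> = (\<Sum>a<n. \<Sum>b<n. \<Sum>cc<n. \<Sum>d<n. ?I a b cc d)"
    by (simp only: rx[of "\<lambda>x. \<Sum>b<n. \<Sum>cc<n. \<Sum>d<n. ?I x b cc d"])
  finally show ?thesis unfolding fourc_def .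
qed

lemma all_same_sign:
  assumes w: "\<forall>j<n. w j = 1 \<or> w j = (-1::int)" and s: "\<bar>\<Sum>j<n. w j\<bar> = int n"
  shows "\<exists>e. (e = 1 \<or> e = -1) \<and> (\<forall>j<n. w j = e)"
proof (cases "(\<Sum>j<n. w j) = int n")
  case True
  have "(\<Sum>j<n. 1 - w j) = 0" using True by (simp add: sum_subtractf)
  moreover have "\<forall>j\<in>{..<n}. 0 \<le> 1 - w j" using w by auto
  ultimately have "\<forall>j\<in>{..<n}. 1 - w j = 0" using sum_nonneg_eq_0_iff[of "{..<n}" "\<lambda>j. 1 - w j"] by simp
  then show ?thesis by (intro exI[of _ 1]) auto
next
  case False
  then have F: "(\<Sum>j<n. w j) = - int n" using s by (auto simp: abs_if split: if_splits)
  have "(\<Sum>j<n. 1 + w j) = 0" using F by (simp add: sum.distrib)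
  moreover have "\<forall>j\<in>{..<n}. 0 \<le> 1 + w j" using w by auto
  ultimately have z: "\<forall>j\<in>{..<n}. 1 + w j = 0" using sum_nonneg_eq_0_iff[of "{..<n}" "\<lambda>j. 1 + w j"] by simp
  have "\<forall>j<n. w j = -1"
  proof (intro allI impI)
    fix j assume "j < n"
    then have "1 + w j = 0" using z by simp
    then show "w j = -1" by linarith
  qed
  then show ?thesis by (intro exI[of _ "-1"]) auto
qed

lemma ind_unique:
  assumes H: "hadamard n H" and n: "0 < n"
    and a: "a < n" and b: "b < n" and c: "c < n" and d: "d < n" and d': "d' < n"
    and i1: "ind n H a b c d \<noteq> 0" and i2: "ind n H a b c d' \<noteq> 0"
  shows "d = d'"
proof (rule ccontr)
  assume ne: "d \<noteq> d'"
  have pm: "\<forall>i<n. \<forall>j<n. H i j = 1 \<or> H i j = -1" and orth: "\<forall>i<n. \<forall>k<n. (\<Sum>j<n. H i j * H k j) = (if i = k then int n else 0)"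
    using H unfolding hadamard_def by auto
  let ?v = "\<lambda>j. H a j * H b j * H c j"
  have v: "?v j * ?v j = 1" if "j < n" for j
  proof -
    have "?v j = 1 \<or> ?v j = -1" using pm a b c that by (intro pm1_mult) auto
    then show ?thesis by auto
  qed
  have w1: "\<forall>j<n. ?v j * H d j = 1 \<or> ?v j * H d j = -1" using pm a b c d by (intro allI impI pm1_mult) auto
  have w2: "\<forall>j<n. ?v j * H d' j = 1 \<or> ?v j * H d' j = -1" using pm a b c d' by (intro allI impI pm1_mult) auto
  obtain e1 where e1: "e1 = 1 \<or> e1 = -1" "\<forall>j<n. ?v j * H d j = e1"
    using all_same_sign[OF w1] i1 unfolding ind_def by (auto split: if_splits)
  obtain e2 where e2: "e2 = 1 \<or> e2 = -1" "\<forall>j<n. ?v j * H d' j = e2"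
    using all_same_sign[OF w2] i2 unfolding ind_def by (auto split: if_splits)
  have "\<forall>j<n. H d j * H d' j = e1 * e2"
  proof (intro allI impI)
    fix j assume j: "j < n"
    have "e1 * e2 = (?v j * H d j) * (?v j * H d' j)" using e1(2) e2(2) j by simp
    also have "\<dots> = (?v j * ?v j) * (H d j * H d' j)" by (simp add: algebra_simps)
    finally have "e1 * e2 = (?v j * ?v j) * (H d j * H d' j)" .
    then show "H d j * H d' j = e1 * e2" using v[OF j] by simp
  qed
  then have "(\<Sum>j<n. H d j * H d' j) = (\<Sum>j<n. e1 * e2)" by simp
  also have "\<dots> = int n * (e1 * e2)" by simp
  finally have "(\<Sum>j<n. H d j * H d' j) \<noteq> 0" using e1 e2 n by auto
  then show False using orth d d' ne by simp
qed

lemma sum_le_one: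
  fixes f :: "nat \<Rightarrow> nat"
  assumes le: "\<forall>d<n. f d \<le> 1" and u: "\<forall>d<n. \<forall>d'<n. f d \<noteq> 0 \<longrightarrow> f d' \<noteq> 0 \<longrightarrow> d = d'"
  shows "(\<Sum>d<n. f d) \<le> 1"
proof (cases "\<exists>d<n. f d \<noteq> 0")
  case False then show ?thesis by simp
next
  case True
  then obtain d0 where d0: "d0 < n" "f d0 \<noteq> 0" by blast
  have "(\<Sum>d<n. f d) = f d0 + (\<Sum>d\<in>{..<n}-{d0}. f d)"
    using d0 by (simp add: sum.remove)
  also have "(\<Sum>d\<in>{..<n}-{d0}. f d) = 0" using u d0 by (intro sum.neutral) auto
  finally show ?thesis using le d0 by simp
qed

lemma fourc_lt:
  assumes H: "hadamard n H" and n: "0 < n"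
    and a0: "a0 < n" and b0: "b0 < n" and c0: "c0 < n"
    and w: "\<forall>d<n. ind n H a0 b0 c0 d = 0"
  shows "fourc n H < n^3"
proof -
  let ?S = "\<lambda>a b c. \<Sum>d<n. ind n H a b c d"
  have le: "?S a b c \<le> 1" if "a < n" "b < n" "c < n" for a b c
    by (rule sum_le_one) (use ind_unique[OF H n that] in \<open>auto simp: ind_def\<close>)
  have z: "?S a0 b0 c0 = 0" using w by simp
  have "fourc n H = (\<Sum>a<n. \<Sum>b<n. \<Sum>c<n. ?S a b c)" unfolding fourc_def ..
  also have "\<dots> < (\<Sum>a<n. \<Sum>b<n. \<Sum>c<n. (1::nat))"
  proof (rule sum_strict_mono_ex1)
    show "\<forall>a\<in>{..<n}. (\<Sum>b<n. \<Sum>c<n. ?S a b c) \<le> (\<Sum>b<n. \<Sum>c<n. 1)"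
      using le by (intro ballI sum_mono) auto
    have "(\<Sum>b<n. \<Sum>c<n. ?S a0 b c) < (\<Sum>b<n. \<Sum>c<n. 1)"
    proof (rule sum_strict_mono_ex1)
      show "\<forall>b\<in>{..<n}. (\<Sum>c<n. ?S a0 b c) \<le> (\<Sum>c<n. 1)"
        using le a0 by (intro ballI sum_mono) auto
      have "(\<Sum>c<n. ?S a0 b0 c) < (\<Sum>c<n. 1)"
      proof (rule sum_strict_mono_ex1)
        show "\<forall>c\<in>{..<n}. ?S a0 b0 c \<le> 1" using le a0 b0 by auto
        show "\<exists>c\<in>{..<n}. ?S a0 b0 c < 1" using z c0 by (intro bexI[of _ c0]) auto
      qed simp
      then show "\<exists>b\<in>{..<n}. (\<Sum>c<n. ?S a0 b c) < (\<Sum>c<n. 1)" using b0 by blast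
    qed simp
    then show "\<exists>a\<in>{..<n}. (\<Sum>b<n. \<Sum>c<n. ?S a b c) < (\<Sum>b<n. \<Sum>c<n. 1)" using a0 by blast
  qed simp
  also have "\<dots> = n^3" by (simp add: power3_eq_cube)
  finally show ?thesis .
qed

lemma fourc_pos:
  assumes H: "hadamard n H" and n: "0 < n"
  shows "0 < fourc n H"
proof -
  have pm: "\<forall>i<n. \<forall>j<n. H i j = 1 \<or> H i j = -1" using H unfolding hadamard_def by auto
  have "(\<Sum>j<n. H 0 j * H 0 j * H 0 j * H 0 j) = (\<Sum>j<n. 1)"
  proof (intro sum.cong refl)
    fix x assume "x \<in> {..<n}"
    then have "H 0 x = 1 \<or> H 0 x = -1" using pm n by auto
    then show "H 0 x * H 0 x * H 0 x * H 0 x = 1" by auto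
  qed
  then have i: "ind n H 0 0 0 0 = 1" unfolding ind_def by simp
  have "ind n H 0 0 0 0 \<le> (\<Sum>d<n. ind n H 0 0 0 d)" using n by (intro member_le_sum) auto
  also have "\<dots> \<le> (\<Sum>c<n. \<Sum>d<n. ind n H 0 0 c d)"
    using n by (intro member_le_sum[of 0 "{..<n}" "\<lambda>c. \<Sum>d<n. ind n H 0 0 c d", simplified]) auto
  also have "\<dots> \<le> (\<Sum>b<n. \<Sum>c<n. \<Sum>d<n. ind n H 0 b c d)"
    using n by (intro member_le_sum[of 0 "{..<n}" "\<lambda>b. \<Sum>c<n. \<Sum>d<n. ind n H 0 b c d", simplified]) auto
  also have "\<dots> \<le> fourc n H" unfolding fourc_def
    using n by (intro member_le_sum[of 0 "{..<n}" "\<lambda>a. \<Sum>b<n. \<Sum>c<n. \<Sum>d<n. ind n H a b c d", simplified]) auto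
  finally show ?thesis using i by simp
qed

definition mat_of :: "int list list \<Rightarrow> nat \<Rightarrow> nat \<Rightarrow> int" where "mat_of L i j = L ! i ! j"

definition Dl :: "int list list" where
  "Dl = [[-1,1,1,1],[1,-1,1,1],[1,1,-1,1],[1,1,1,-1]]"

lemma D_fourc: "fourc 4 (mat_of Dl) = 64"
  by code_simp

lemma D_had: "hadamard 4 (mat_of Dl)"
  unfolding hadamard_def by code_simp

lemma D_gr: "graphical 4 (mat_of Dl)"
  unfolding graphical_def by code_simp

lemma D_reg: "regular 4 (mat_of Dl)"
  unfolding regular_def by (rule exI[of _ 2]) code_simp

fun kp :: "(nat\<Rightarrow>nat\<Rightarrow>int) \<Rightarrow> nat \<Rightarrow> nat \<Rightarrow> nat\<Rightarrow>nat\<Rightarrow>int" where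
  "kp X nx 0 = (\<lambda>i j. 1)"
| "kp X nx (Suc t) = kron (nx^t) X (kp X nx t)"

lemma kp_props:
  assumes H: "hadamard nx X" and G: "graphical nx X" and R: "regular nx X" and n: "0 < nx"
  shows "hadamard (nx^t) (kp X nx t) \<and> graphical (nx^t) (kp X nx t) \<and> regular (nx^t) (kp X nx t)
         \<and> fourc (nx^t) (kp X nx t) = fourc nx X ^ t"
proof (induction t)
  case 0
  have "hadamard 1 (\<lambda>i j. 1)" unfolding hadamard_def by simp
  moreover have "graphical 1 (\<lambda>i j. 1)" unfolding graphical_def by simp
  moreover have "regular 1 (\<lambda>i j. 1)" unfolding regular_def by simp
  moreover have "fourc 1 (\<lambda>i j. 1) = 1" unfolding fourc_def ind_def by simp
  ultimately show ?case by simp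
next
  case (Suc t)
  have p: "0 < nx^t" using n by simp
  have e: "nx^Suc t = nx * nx^t" by simp
  show ?case unfolding e kp.simps
    using kron_hadamard[OF H _ p] kron_graphical[OF G] kron_regular[OF R _ p]
      fourc_kron[OF H _ n p] Suc.IH by simp
qed

fun ortho_all :: "int list list \<Rightarrow> bool" where
  "ortho_all [] = True"
| "ortho_all (r#rs) = (list_all (\<lambda>s. sum_list (map2 (*) r s) = 0) rs \<and> ortho_all rs)"

lemma ortho_nth: "ortho_all L \<Longrightarrow> i < k \<Longrightarrow> k < length L \<Longrightarrow> sum_list (map2 (*) (L!i) (L!k)) = 0"
proof (induction L arbitrary: i k)
  case Nil then show ?case by simp
next
  case (Cons r rs)
  show ?case
  proof (cases i)
    case 0
    then obtain k' where k: "k = Suc k'" using Cons.prems by (cases k) auto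
    then show ?thesis using Cons.prems 0 by (auto simp: list_all_length)
  next
    case (Suc i')
    then obtain k' where k: "k = Suc k'" using Cons.prems by (cases k) auto
    then show ?thesis using Cons.prems Cons.IH[of i' k'] Suc by auto
  qed
qed

lemma dot_conv:
  assumes "length xs = n" "length ys = n"
  shows "sum_list (map2 (*) xs ys) = (\<Sum>j<n. xs!j * ys!j :: int)"
  using assms by (simp add: sum_list_sum_nth atLeast0LessThan)

lemma list_hadamard:
  assumes len: "length L = n" and rows: "list_all (\<lambda>r. length r = n) L"
    and pm: "list_all (list_all (\<lambda>x. x = 1 \<or> x = -1)) L" and o: "ortho_all L"
  shows "hadamard n (mat_of L)"
  unfolding hadamard_def
proof (intro conjI allI impI)
  fix i j assume "i < n" "j < n"
  then show "mat_of L i j = 1 \<or> mat_of L i j = -1"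
    using pm rows len unfolding mat_of_def by (auto simp: list_all_length)
next
  fix i k assume i: "i < n" and k: "k < n"
  have li: "length (L!i) = n" and lk: "length (L!k) = n" using rows len i k by (auto simp: list_all_length)
  show "(\<Sum>j<n. mat_of L i j * mat_of L k j) = (if i = k then int n else 0)"
  proof (cases "i = k")
    case True
    have "(\<Sum>j<n. mat_of L i j * mat_of L k j) = (\<Sum>j<n. 1)"
    proof (intro sum.cong refl)
      fix j assume "j \<in> {..<n}"
      then have "L!i!j = 1 \<or> L!i!j = -1" using pm rows len i by (auto simp: list_all_length)
      then show "mat_of L i j * mat_of L k j = 1" using True unfolding mat_of_def by auto
    qed
    then show ?thesis using True by simp
  next
    case False
    show ?thesis
    proof (cases "i < k")
      case True
      then show ?thesis using ortho_nth[OF o True] k len dot_conv[OF li lk] False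
        unfolding mat_of_def by simp
    next
      case c: False
      then have "k < i" using False by simp
      then have "(\<Sum>j<n. L!k!j * L!i!j) = 0" using ortho_nth[OF o \<open>k < i\<close>] i len dot_conv[OF lk li] by simp
      then show ?thesis using False unfolding mat_of_def by (simp add: mult.commute)
    qed
  qed
qed

lemma list_sym:
  assumes len: "length L = n" and rows: "list_all (\<lambda>r. length r = n) L" and t: "transpose L = L"
    and i: "i < n" and j: "j < n"
  shows "L!i!j = L!j!i"
proof -
  have tr: "transpose L = map (\<lambda>i. map (\<lambda>j. L ! j ! i) [0..<length L]) [0..<n]"
    by (rule transpose_rectangle) (use len rows in \<open>auto simp: list_all_length\<close>)
  have "L!i!j = transpose L ! i ! j" using t by simp
  also have "\<dots> = L!j!i" unfolding tr using i j len by simp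
  finally show ?thesis .
qed

lemma list_graphical:
  assumes len: "length L = n" and rows: "list_all (\<lambda>r. length r = n) L" and t: "transpose L = L"
    and dg: "list_all (\<lambda>i. L!i!i = 1) [0..<n]"
  shows "graphical n (mat_of L)"
  unfolding graphical_def mat_of_def
  using list_sym[OF len rows t] dg by (auto simp: list_all_iff)

lemma list_regular:
  assumes len: "length L = n" and rows: "list_all (\<lambda>r. length r = n) L" and t: "transpose L = L"
    and rs: "list_all (\<lambda>r. sum_list r = s) L"
  shows "regular n (mat_of L)"
  unfolding regular_def
proof (intro exI[of _ s] conjI allI impI)
  fix i assume i: "i < n"
  have li: "length (L!i) = n" using rows len i by (auto simp: list_all_length)
  have "(\<Sum>j<n. mat_of L i j) = sum_list (L!i)"
    unfolding mat_of_def using li by (simp add: sum_list_sum_nth atLeast0LessThan)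
  then show "(\<Sum>j<n. mat_of L i j) = s" using rs i len by (simp add: list_all_length)
next
  fix j assume j: "j < n"
  have "(\<Sum>i<n. mat_of L i j) = (\<Sum>i<n. mat_of L j i)"
    unfolding mat_of_def using list_sym[OF len rows t] j by (intro sum.cong) auto
  also have "\<dots> = sum_list (L!j)"
    unfolding mat_of_def using rows len j by (simp add: sum_list_sum_nth atLeast0LessThan list_all_length)
  finally show "(\<Sum>i<n. mat_of L i j) = s" using rs j len by (simp add: list_all_length)
qed

lemma list_witness:
  assumes len: "length L = n" and rows: "list_all (\<lambda>r. length r = n) L"
    and a: "a < n" and b: "b < n" and c: "c < n"
    and w: "list_all (\<lambda>r. \<bar>sum_list (map2 (*) (map2 (*) (map2 (*) (L!a) (L!b)) (L!c)) r)\<bar> \<noteq> int n) L"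
  shows "\<forall>d<n. ind n (mat_of L) a b c d = 0"
proof (intro allI impI)
  fix d assume d: "d < n"
  have l: "length (L!x) = n" if "x < n" for x using rows len that by (auto simp: list_all_length)
  let ?v = "map2 (*) (map2 (*) (L!a) (L!b)) (L!c)"
  have lv: "length ?v = n" using l[OF a] l[OF b] l[OF c] by simp
  have "sum_list (map2 (*) ?v (L!d)) = (\<Sum>j<n. ?v!j * L!d!j)" by (rule dot_conv[OF lv l[OF d]])
  also have "\<dots> = (\<Sum>j<n. L!a!j * L!b!j * L!c!j * L!d!j)"
    using l[OF a] l[OF b] l[OF c] by (intro sum.cong) auto
  finally have "\<bar>\<Sum>j<n. L!a!j * L!b!j * L!c!j * L!d!j\<bar> \<noteq> int n"
    using w d len by (auto simp: list_all_length)
  then show "ind n (mat_of L) a b c d = 0" unfolding ind_def mat_of_def by simp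
qed

definition Bl :: "int list list" where
  "Bl = [[1,1,1,1,1,1,1,1,1,-1,-1,1,-1,1,-1,1,1,1,1,-1,-1,-1,-1,1,1,-1,-1,-1,1,-1,1,1,1,1,-1,-1,-1,1,1,-1,1,-1,1,-1,1,1,-1,-1,1,1,-1,1,1,-1,-1,-1,1,-1,1,1,-1,-1,1,-1],
 [1,1,1,1,1,1,1,1,-1,1,1,-1,1,-1,1,-1,1,1,-1,1,-1,-1,1,-1,-1,1,-1,-1,-1,1,1,1,1,1,-1,-1,1,-1,-1,1,-1,1,-1,1,1,1,-1,-1,1,1,1,-1,-1,1,-1,-1,-1,1,1,1,-1,-1,-1,1],
 [1,1,1,1,1,1,1,1,-1,1,1,-1,-1,1,-1,1,1,-1,1,1,-1,1,-1,-1,-1,-1,1,-1,1,1,1,-1,-1,-1,1,1,1,-1,-1,1,1,-1,1,-1,-1,-1,1,1,-1,1,1,1,-1,-1,1,-1,1,1,1,-1,1,-1,-1,-1],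
 [1,1,1,1,1,1,1,1,1,-1,-1,1,1,-1,1,-1,-1,1,1,1,1,-1,-1,-1,-1,-1,-1,1,1,1,-1,1,-1,-1,1,1,-1,1,1,-1,-1,1,-1,1,-1,-1,1,1,1,-1,1,1,-1,-1,-1,1,1,1,-1,1,-1,1,-1,-1],
 [1,1,1,1,1,1,1,1,-1,1,-1,1,1,-1,-1,1,-1,-1,-1,1,1,1,1,-1,1,-1,1,1,1,-1,-1,-1,-1,1,1,-1,1,1,-1,-1,1,1,-1,-1,1,-1,1,-1,1,-1,-1,-1,1,1,-1,1,-1,-1,1,-1,1,-1,1,1],
 [1,1,1,1,1,1,1,1,1,-1,1,-1,-1,1,1,-1,-1,-1,1,-1,1,1,-1,1,-1,1,1,1,-1,1,-1,-1,1,-1,-1,1,1,1,-1,-1,1,1,-1,-1,-1,1,-1,1,-1,1,-1,-1,1,1,1,-1,-1,-1,-1,1,-1,1,1,1],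
 [1,1,1,1,1,1,1,1,-1,1,-1,1,-1,1,1,-1,-1,1,-1,-1,1,-1,1,1,1,1,1,-1,-1,-1,1,-1,1,-1,-1,1,-1,-1,1,1,-1,-1,1,1,1,-1,1,-1,-1,-1,1,-1,-1,1,1,1,1,-1,-1,-1,1,1,1,-1],
 [1,1,1,1,1,1,1,1,1,-1,1,-1,1,-1,-1,1,1,-1,-1,-1,-1,1,1,1,1,1,-1,1,-1,-1,-1,1,-1,1,1,-1,-1,-1,1,1,-1,-1,1,1,-1,1,-1,1,-1,-1,-1,1,1,-1,1,1,-1,1,-1,-1,1,1,-1,1],
 [1,-1,-1,1,-1,1,-1,1,1,1,1,1,1,1,1,1,1,-1,-1,-1,1,-1,1,1,1,1,1,-1,-1,-1,-1,1,1,-1,1,-1,1,1,-1,-1,1,1,-1,-1,-1,1,1,-1,1,-1,1,1,-1,-1,1,-1,1,1,-1,1,1,-1,-1,-1],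
 [-1,1,1,-1,1,-1,1,-1,1,1,1,1,1,1,1,1,-1,1,-1,-1,-1,1,1,1,1,1,-1,1,-1,-1,1,-1,-1,1,-1,1,1,1,-1,-1,1,1,-1,-1,1,-1,-1,1,-1,1,1,1,-1,-1,-1,1,1,1,1,-1,-1,1,-1,-1],
 [-1,1,1,-1,-1,1,-1,1,1,1,1,1,1,1,1,1,-1,-1,1,-1,1,1,1,-1,1,-1,1,1,-1,1,-1,-1,1,-1,1,-1,-1,-1,1,1,-1,-1,1,1,1,-1,-1,1,1,1,1,-1,1,-1,-1,-1,-1,1,1,1,-1,-1,1,-1],
 [1,-1,-1,1,1,-1,1,-1,1,1,1,1,1,1,1,1,-1,-1,-1,1,1,1,-1,1,-1,1,1,1,1,-1,-1,-1,-1,1,-1,1,-1,-1,1,1,-1,-1,1,1,-1,1,1,-1,1,1,-1,1,-1,1,-1,-1,1,-1,1,1,-1,-1,-1,1],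
 [-1,1,-1,1,1,-1,-1,1,1,1,1,1,1,1,1,1,1,-1,1,1,1,-1,-1,-1,-1,-1,-1,1,1,1,1,-1,1,1,-1,-1,1,-1,1,-1,-1,1,1,-1,1,1,-1,-1,-1,-1,1,-1,1,-1,1,1,1,-1,-1,-1,1,1,-1,1],
 [1,-1,1,-1,-1,1,1,-1,1,1,1,1,1,1,1,1,-1,1,1,1,-1,1,-1,-1,-1,-1,1,-1,1,1,-1,1,1,1,-1,-1,-1,1,-1,1,1,-1,-1,1,1,1,-1,-1,-1,-1,-1,1,-1,1,1,1,-1,1,-1,-1,1,1,1,-1],
 [-1,1,-1,1,-1,1,1,-1,1,1,1,1,1,1,1,1,1,1,1,-1,-1,-1,1,-1,-1,1,-1,-1,1,-1,1,1,-1,-1,1,1,1,-1,1,-1,1,-1,-1,1,-1,-1,1,1,1,-1,-1,-1,1,1,1,-1,-1,-1,1,-1,-1,1,1,1],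
 [1,-1,1,-1,1,-1,-1,1,1,1,1,1,1,1,1,1,1,1,-1,1,-1,-1,-1,1,1,-1,-1,-1,-1,1,1,1,-1,-1,1,1,-1,1,-1,1,-1,1,1,-1,-1,-1,1,1,-1,1,-1,-1,1,1,-1,1,-1,-1,-1,1,1,-1,1,1],
 [1,1,1,-1,-1,-1,-1,1,1,-1,-1,-1,1,-1,1,1,1,1,1,1,1,1,1,1,1,-1,-1,1,-1,1,-1,1,1,1,-1,1,1,-1,-1,-1,1,-1,1,1,-1,-1,1,-1,1,1,-1,-1,-1,1,1,-1,1,-1,1,-1,1,1,-1,-1],
 [1,1,-1,1,-1,-1,1,-1,-1,1,-1,-1,-1,1,1,1,1,1,1,1,1,1,1,1,-1,1,1,-1,1,-1,1,-1,1,1,1,-1,-1,1,-1,-1,-1,1,1,1,-1,-1,-1,1,1,1,-1,-1,1,-1,-1,1,-1,1,-1,1,1,1,-1,-1],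
 [1,-1,1,1,-1,1,-1,-1,-1,-1,1,-1,1,1,1,-1,1,1,1,1,1,1,1,1,-1,1,1,-1,-1,1,-1,1,-1,1,1,1,-1,-1,1,-1,1,1,1,-1,1,-1,-1,-1,-1,-1,1,1,1,-1,-1,1,1,-1,1,-1,-1,-1,1,1],
 [-1,1,1,1,1,-1,-1,-1,-1,-1,-1,1,1,1,-1,1,1,1,1,1,1,1,1,1,1,-1,-1,1,1,-1,1,-1,1,-1,1,1,-1,-1,-1,1,1,1,-1,1,-1,1,-1,-1,-1,-1,1,1,-1,1,1,-1,-1,1,-1,1,-1,-1,1,1],
 [-1,-1,-1,1,1,1,1,-1,1,-1,1,1,1,-1,-1,-1,1,1,1,1,1,1,1,1,-1,1,-1,1,1,-1,-1,1,1,-1,-1,-1,1,1,-1,1,-1,-1,1,-1,1,-1,1,1,-1,1,1,-1,1,1,-1,-1,1,1,-1,-1,1,-1,1,-1],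
 [-1,-1,1,-1,1,1,-1,1,-1,1,1,1,-1,1,-1,-1,1,1,1,1,1,1,1,1,1,-1,1,-1,-1,1,1,-1,-1,1,-1,-1,1,1,1,-1,-1,-1,-1,1,-1,1,1,1,1,-1,-1,1,1,1,-1,-1,1,1,-1,-1,-1,1,-1,1],
 [-1,1,-1,-1,1,-1,1,1,1,1,1,-1,-1,-1,1,-1,1,1,1,1,1,1,1,1,-1,1,-1,1,-1,1,1,-1,-1,-1,1,-1,-1,1,1,1,1,-1,-1,-1,1,1,1,-1,1,-1,-1,1,-1,-1,1,1,-1,-1,1,1,1,-1,1,-1],
 [1,-1,-1,-1,-1,1,1,1,1,1,-1,1,-1,-1,-1,1,1,1,1,1,1,1,1,1,1,-1,1,-1,1,-1,-1,1,-1,-1,-1,1,1,-1,1,1,-1,1,-1,-1,1,1,-1,1,-1,1,1,-1,-1,-1,1,1,-1,-1,1,1,-1,1,-1,1],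
 [1,-1,-1,-1,1,-1,1,1,1,1,1,-1,-1,-1,-1,1,1,-1,-1,1,-1,1,-1,1,1,1,1,1,1,1,1,1,1,-1,1,1,-1,-1,1,-1,1,1,-1,1,1,-1,-1,-1,1,-1,1,-1,1,1,-1,-1,1,1,-1,-1,-1,1,1,-1],
 [-1,1,-1,-1,-1,1,1,1,1,1,-1,1,-1,-1,1,-1,-1,1,1,-1,1,-1,1,-1,1,1,1,1,1,1,1,1,-1,1,1,1,-1,-1,-1,1,1,1,1,-1,-1,1,-1,-1,-1,1,-1,1,1,1,-1,-1,1,1,-1,-1,1,-1,-1,1],
 [-1,-1,1,-1,1,1,1,-1,1,-1,1,1,-1,1,-1,-1,-1,1,1,-1,-1,1,-1,1,1,1,1,1,1,1,1,1,1,1,1,-1,1,-1,-1,-1,-1,1,1,1,-1,-1,1,-1,1,-1,1,-1,-1,-1,1,1,-1,-1,1,1,1,-1,-1,1],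
 [-1,-1,-1,1,1,1,-1,1,-1,1,1,1,1,-1,-1,-1,1,-1,-1,1,1,-1,1,-1,1,1,1,1,1,1,1,1,1,1,-1,1,-1,1,-1,-1,1,-1,1,1,-1,-1,-1,1,-1,1,-1,1,-1,-1,1,1,-1,-1,1,1,-1,1,1,-1],
 [1,-1,1,1,1,-1,-1,-1,-1,-1,-1,1,1,1,1,-1,-1,1,-1,1,1,-1,-1,1,1,1,1,1,1,1,1,1,-1,-1,1,-1,1,-1,1,1,1,-1,-1,-1,1,1,-1,1,1,1,-1,-1,1,-1,1,-1,-1,1,1,-1,1,1,-1,-1],
 [-1,1,1,1,-1,1,-1,-1,-1,-1,1,-1,1,1,-1,1,1,-1,1,-1,-1,1,1,-1,1,1,1,1,1,1,1,1,-1,-1,-1,1,-1,1,1,1,-1,1,-1,-1,1,1,1,-1,1,1,-1,-1,-1,1,-1,1,1,-1,-1,1,1,1,-1,-1],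
 [1,1,1,-1,-1,-1,1,-1,-1,1,-1,-1,1,-1,1,1,-1,1,-1,1,-1,1,1,-1,1,1,1,1,1,1,1,1,1,-1,-1,-1,1,1,1,-1,-1,-1,1,-1,-1,1,1,1,-1,-1,1,1,1,-1,1,-1,1,-1,-1,1,-1,-1,1,1],
 [1,1,-1,1,-1,-1,-1,1,1,-1,-1,-1,-1,1,1,1,1,-1,1,-1,1,-1,-1,1,1,1,1,1,1,1,1,1,-1,1,-1,-1,1,1,-1,1,-1,-1,-1,1,1,-1,1,1,-1,-1,1,1,-1,1,-1,1,-1,1,1,-1,-1,-1,1,1],
 [1,1,-1,-1,-1,1,1,-1,1,-1,1,-1,1,1,-1,-1,1,1,-1,1,1,-1,-1,-1,1,-1,1,1,-1,-1,1,-1,1,1,1,1,1,1,1,1,1,-1,-1,1,-1,1,-1,1,1,1,1,-1,-1,-1,-1,1,1,-1,-1,-1,1,-1,1,1],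
 [1,1,-1,-1,1,-1,-1,1,-1,1,-1,1,1,1,-1,-1,1,1,1,-1,-1,1,-1,-1,-1,1,1,1,-1,-1,-1,1,1,1,1,1,1,1,1,1,-1,1,1,-1,1,-1,1,-1,1,1,-1,1,-1,-1,1,-1,-1,1,-1,-1,-1,1,1,1],
 [-1,-1,1,1,1,-1,-1,1,1,-1,1,-1,-1,-1,1,1,-1,1,1,1,-1,-1,1,-1,1,1,1,-1,1,-1,-1,-1,1,1,1,1,1,1,1,1,-1,1,1,-1,-1,1,-1,1,1,-1,1,1,-1,1,-1,-1,-1,-1,1,-1,1,1,1,-1],
 [-1,-1,1,1,-1,1,1,-1,-1,1,-1,1,-1,-1,1,1,1,-1,1,1,-1,-1,-1,1,1,1,-1,1,-1,1,-1,-1,1,1,1,1,1,1,1,1,1,-1,-1,1,1,-1,1,-1,-1,1,1,1,1,-1,-1,-1,-1,-1,-1,1,1,1,-1,1],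
 [-1,1,1,-1,1,1,-1,-1,1,1,-1,-1,1,-1,1,-1,1,-1,-1,-1,1,1,-1,1,-1,-1,1,-1,1,-1,1,1,1,1,1,1,1,1,1,1,-1,1,-1,1,1,-1,-1,1,-1,-1,-1,1,1,1,1,-1,1,-1,1,1,1,-1,-1,-1],
 [1,-1,-1,1,1,1,-1,-1,1,1,-1,-1,-1,1,-1,1,-1,1,-1,-1,1,1,1,-1,-1,-1,-1,1,-1,1,1,1,1,1,1,1,1,1,1,1,1,-1,1,-1,-1,1,1,-1,-1,-1,1,-1,1,1,-1,1,-1,1,1,1,-1,1,-1,-1],
 [1,-1,-1,1,-1,-1,1,1,-1,-1,1,1,1,-1,1,-1,-1,-1,1,-1,-1,1,1,1,1,-1,-1,-1,1,1,1,-1,1,1,1,1,1,1,1,1,-1,1,-1,1,-1,1,1,-1,-1,1,-1,-1,1,-1,1,1,1,1,1,-1,-1,-1,1,-1],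
 [-1,1,1,-1,-1,-1,1,1,-1,-1,1,1,-1,1,-1,1,-1,-1,-1,1,1,-1,1,1,-1,1,-1,-1,1,1,-1,1,1,1,1,1,1,1,1,1,1,-1,1,-1,1,-1,-1,1,1,-1,-1,-1,-1,1,1,1,1,1,-1,1,-1,-1,-1,1],
 [1,-1,1,-1,1,1,-1,-1,1,1,-1,-1,-1,1,1,-1,1,-1,1,1,-1,-1,1,-1,1,1,-1,1,1,-1,-1,-1,1,-1,-1,1,-1,1,-1,1,1,1,1,1,1,1,1,1,1,-1,-1,-1,1,-1,1,1,1,1,1,-1,-1,-1,-1,1],
 [-1,1,-1,1,1,1,-1,-1,1,1,-1,-1,1,-1,-1,1,-1,1,1,1,-1,-1,-1,1,1,1,1,-1,-1,1,-1,-1,-1,1,1,-1,1,-1,1,-1,1,1,1,1,1,1,1,1,-1,1,-1,-1,-1,1,1,1,1,1,-1,1,-1,-1,1,-1],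
 [1,-1,1,-1,-1,-1,1,1,-1,-1,1,1,1,-1,-1,1,1,1,1,-1,1,-1,-1,-1,-1,1,1,1,-1,-1,1,-1,-1,1,1,-1,-1,1,-1,1,1,1,1,1,1,1,1,1,-1,-1,1,-1,1,1,1,-1,1,-1,1,1,-1,1,-1,-1],
 [-1,1,-1,1,-1,-1,1,1,-1,-1,1,1,-1,1,1,-1,1,1,-1,1,-1,1,-1,-1,1,-1,1,1,-1,-1,-1,1,1,-1,-1,1,1,-1,1,-1,1,1,1,1,1,1,1,1,-1,-1,-1,1,1,1,-1,1,-1,1,1,1,1,-1,-1,-1],
 [1,1,-1,-1,1,-1,1,-1,-1,1,1,-1,1,1,-1,-1,-1,-1,1,-1,1,-1,1,1,1,-1,-1,-1,1,1,-1,1,-1,1,-1,1,1,-1,-1,1,1,1,1,1,1,1,1,1,1,-1,1,1,1,-1,-1,-1,-1,-1,-1,1,1,1,1,-1],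
 [1,1,-1,-1,-1,1,-1,1,1,-1,-1,1,1,1,-1,-1,-1,-1,-1,1,-1,1,1,1,-1,1,-1,-1,1,1,1,-1,1,-1,1,-1,-1,1,1,-1,1,1,1,1,1,1,1,1,-1,1,1,1,-1,1,-1,-1,-1,-1,1,-1,1,1,-1,1],
 [-1,-1,1,1,1,-1,1,-1,1,-1,-1,1,-1,-1,1,1,1,-1,-1,-1,1,1,1,-1,-1,-1,1,-1,-1,1,1,1,-1,1,-1,1,-1,1,1,-1,1,1,1,1,1,1,1,1,1,1,1,-1,-1,-1,1,-1,-1,1,-1,-1,1,-1,1,1],
 [-1,-1,1,1,-1,1,-1,1,-1,1,1,-1,-1,-1,1,1,-1,1,-1,-1,1,1,-1,1,-1,-1,-1,1,1,-1,1,1,1,-1,1,-1,1,-1,-1,1,1,1,1,1,1,1,1,1,1,1,-1,1,-1,-1,-1,1,1,-1,-1,-1,-1,1,1,1],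
 [1,1,-1,1,1,-1,-1,-1,1,-1,1,1,-1,-1,1,-1,1,1,-1,-1,-1,1,1,-1,1,-1,1,-1,1,1,-1,-1,1,1,1,-1,-1,-1,-1,1,1,-1,-1,-1,1,-1,1,1,1,1,1,1,1,1,1,1,1,-1,-1,1,-1,1,-1,1],
 [1,1,1,-1,-1,1,-1,-1,-1,1,1,1,-1,-1,-1,1,1,1,-1,-1,1,-1,-1,1,-1,1,-1,1,1,1,-1,-1,1,1,-1,1,-1,-1,1,-1,-1,1,-1,-1,-1,1,1,1,1,1,1,1,1,1,1,1,-1,1,1,-1,1,-1,1,-1],
 [-1,1,1,1,-1,-1,1,-1,1,1,1,-1,1,-1,-1,-1,-1,-1,1,1,1,-1,-1,1,1,-1,1,-1,-1,-1,1,1,1,-1,1,1,-1,1,-1,-1,-1,-1,1,-1,1,1,1,-1,1,1,1,1,1,1,1,1,-1,1,1,-1,-1,1,-1,1],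
 [1,-1,1,1,-1,-1,-1,1,1,1,-1,1,-1,1,-1,-1,-1,-1,1,1,-1,1,1,-1,-1,1,-1,1,-1,-1,1,1,-1,1,1,1,1,-1,-1,-1,-1,-1,-1,1,1,1,-1,1,1,1,1,1,1,1,1,1,1,-1,-1,1,1,-1,1,-1],
 [1,-1,-1,-1,1,1,-1,1,-1,-1,1,-1,1,-1,1,1,-1,1,1,-1,1,1,-1,-1,1,1,-1,-1,1,-1,1,-1,-1,-1,-1,1,1,1,1,-1,1,-1,1,1,1,-1,-1,-1,1,1,1,1,1,1,1,1,-1,1,-1,1,1,-1,-1,1],
 [-1,1,-1,-1,1,1,1,-1,-1,-1,-1,1,-1,1,1,1,1,-1,-1,1,1,1,-1,-1,1,1,-1,-1,-1,1,-1,1,-1,-1,1,-1,1,1,-1,1,-1,1,1,1,-1,1,-1,-1,1,1,1,1,1,1,1,1,1,-1,1,-1,-1,1,1,-1],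
 [-1,-1,1,-1,-1,1,1,1,1,-1,-1,-1,1,1,1,-1,1,-1,-1,1,-1,-1,1,1,-1,-1,1,1,1,-1,1,-1,-1,1,-1,-1,1,-1,1,1,1,1,1,-1,-1,-1,1,-1,1,1,1,1,1,1,1,1,-1,1,-1,1,-1,1,1,-1],
 [-1,-1,-1,1,1,-1,1,1,-1,1,-1,-1,1,1,-1,1,-1,1,1,-1,-1,-1,1,1,-1,-1,1,1,-1,1,-1,1,1,-1,-1,-1,-1,1,1,1,1,1,-1,1,-1,-1,-1,1,1,1,1,1,1,1,1,1,1,-1,1,-1,1,-1,-1,1],
 [1,-1,1,1,-1,-1,1,-1,1,1,-1,1,1,-1,-1,-1,1,-1,1,-1,1,1,-1,-1,1,1,-1,-1,-1,1,1,-1,1,-1,-1,-1,1,-1,1,1,1,1,1,-1,-1,-1,-1,1,1,-1,-1,1,-1,1,-1,1,1,1,1,1,1,1,1,1],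
 [-1,1,1,1,-1,-1,-1,1,1,1,1,-1,-1,1,-1,-1,-1,1,-1,1,1,1,-1,-1,1,1,-1,-1,1,-1,-1,1,-1,1,-1,-1,-1,1,1,1,1,1,-1,1,-1,-1,1,-1,-1,1,1,-1,1,-1,1,-1,1,1,1,1,1,1,1,1],
 [1,1,1,-1,1,-1,-1,-1,-1,1,1,1,-1,-1,1,-1,1,-1,1,-1,-1,-1,1,1,-1,-1,1,1,1,-1,-1,1,-1,-1,1,-1,1,1,1,-1,1,-1,1,1,-1,1,-1,-1,-1,1,1,-1,-1,1,-1,1,1,1,1,1,1,1,1,1],
 [1,1,-1,1,-1,1,-1,-1,1,-1,1,1,-1,-1,-1,1,-1,1,-1,1,-1,-1,1,1,-1,-1,1,1,-1,1,1,-1,-1,-1,-1,1,1,1,-1,1,-1,1,1,1,1,-1,-1,-1,1,-1,-1,1,1,-1,1,-1,1,1,1,1,1,1,1,1],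
 [-1,-1,1,-1,1,-1,1,1,1,-1,-1,-1,1,1,-1,1,1,1,-1,-1,1,-1,1,-1,-1,1,1,-1,1,1,-1,-1,1,-1,1,1,1,-1,-1,-1,-1,-1,-1,1,1,1,1,-1,-1,1,-1,1,1,-1,-1,1,1,1,1,1,1,1,1,1],
 [-1,-1,-1,1,-1,1,1,1,-1,1,-1,-1,1,1,1,-1,1,1,-1,-1,-1,1,-1,1,1,-1,-1,1,1,1,-1,-1,-1,1,1,1,-1,1,-1,-1,-1,-1,1,-1,1,1,-1,1,1,-1,1,-1,-1,1,1,-1,1,1,1,1,1,1,1,1],
 [1,-1,-1,-1,1,1,1,-1,-1,-1,1,-1,-1,1,1,1,-1,-1,1,1,1,-1,1,-1,1,-1,-1,1,-1,-1,1,1,1,1,1,-1,-1,-1,1,-1,-1,1,-1,-1,1,-1,1,1,-1,1,-1,1,-1,1,1,-1,1,1,1,1,1,1,1,1],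
 [-1,1,-1,-1,1,1,-1,1,-1,-1,-1,1,1,-1,1,1,-1,-1,1,1,-1,1,-1,1,-1,1,1,-1,-1,-1,1,1,1,1,-1,1,-1,-1,-1,1,1,-1,-1,-1,-1,1,1,1,1,-1,1,-1,1,-1,-1,1,1,1,1,1,1,1,1,1]]"

lemma B_len: "length Bl = 64" by code_simp
lemma B_rows: "list_all (\<lambda>r. length r = 64) Bl" by code_simp
lemma B_pm: "list_all (list_all (\<lambda>x. x = 1 \<or> x = -1)) Bl" by code_simp
lemma B_t: "transpose Bl = Bl" by code_simp
lemma B_dg: "list_all (\<lambda>i. Bl!i!i = 1) [0..<64]" by code_simp
lemma B_rs: "list_all (\<lambda>r. sum_list r = 8) Bl" by code_simp
lemma B_w: "list_all (\<lambda>r. \<bar>sum_list (map2 (*) (map2 (*) (map2 (*) (Bl!0) (Bl!1)) (Bl!2)) r)\<bar> \<noteq> int 64) Bl"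
  by code_simp
lemma B_o: "ortho_all Bl" by code_simp

lemma B_had: "hadamard 64 (mat_of Bl)"
  by (rule list_hadamard[OF B_len B_rows B_pm B_o])
lemma B_gr: "graphical 64 (mat_of Bl)"
  by (rule list_graphical[OF B_len B_rows B_t B_dg])
lemma B_reg: "regular 64 (mat_of Bl)"
  by (rule list_regular[OF B_len B_rows B_t B_rs])
lemma B_lt: "fourc 64 (mat_of Bl) < 64^3"
  by (rule fourc_lt[OF B_had _ _ _ _ list_witness[OF B_len B_rows _ _ _ B_w]]) auto
lemma B_pos: "0 < fourc 64 (mat_of Bl)"
  by (rule fourc_pos[OF B_had]) simp

lemma chain_strict:
  fixes cB X :: nat
  assumes "0 < cB" "cB < X" "t < t'" "t' \<le> N"
  shows "cB^t' * X^(N-t') < cB^t * X^(N-t)"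
proof -
  have e1: "cB^t' = cB^t * cB^(t'-t)" using assms by (simp add: power_add[symmetric])
  have e2: "X^(N-t) = X^(t'-t) * X^(N-t')" using assms by (simp add: power_add[symmetric])
  have "cB^(t'-t) < X^(t'-t)" using assms by (intro power_strict_mono) auto
  then have "cB^t * cB^(t'-t) * X^(N-t') < cB^t * X^(t'-t) * X^(N-t')"
    using assms by simp
  then show ?thesis unfolding e1 e2 by (simp add: mult.assoc)
qed

definition Mt :: "nat \<Rightarrow> nat \<Rightarrow> nat \<Rightarrow> nat \<Rightarrow> int" where
  "Mt N t = kron (4^(3*(N-t))) (kp (mat_of Bl) 64 t) (kp (mat_of Dl) 4 (3*(N-t)))"

lemma Mt_props:
  assumes "t \<le> N"
  shows "hadamard (4^(3*N)) (Mt N t) \<and> graphical (4^(3*N)) (Mt N t) \<and> regular (4^(3*N)) (Mt N t)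
     \<and> fourc (4^(3*N)) (Mt N t) = fourc 64 (mat_of Bl) ^ t * (64^3)^(N-t)"
proof -
  have ord: "(4::nat)^(3*N) = 64^t * 4^(3*(N-t))"
  proof -
    have "(64::nat)^t = 4^(3*t)" by (simp add: power_mult)
    then show ?thesis using assms by (simp add: power_add[symmetric])
  qed
  have pB: "0 < (64::nat)^t" and pD: "0 < (4::nat)^(3*(N-t))" by simp_all
  note KB = kp_props[OF B_had B_gr B_reg, of t, simplified]
  note KD = kp_props[OF D_had D_gr D_reg, of "3*(N-t)", simplified]
  have f: "fourc (4::nat) (mat_of Dl) ^ (3*(N-t)) = (64^3)^(N-t)" by (simp add: D_fourc power_mult)
  show ?thesis unfolding ord Mt_def
    using kron_hadamard[OF _ _ pD] kron_graphical kron_regular[OF _ _ pD] fourc_kron[OF _ _ pB pD] KB KD f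
    by simp
qed

theorem mainTheorem7:
  shows "\<forall>N::nat. \<exists>m::nat. \<exists>S. finite S \<and> card S \<ge> N \<and>
           (\<forall>H\<in>S. hadamard (4^m) H \<and> graphical (4^m) H \<and> regular (4^m) H) \<and>
           (\<forall>H\<in>S. \<forall>K\<in>S. H \<noteq> K \<longrightarrow> \<not> hadamard_equiv (4^m) H K)"
proof
  fix N :: nat
  let ?cB = "fourc 64 (mat_of Bl)"
  let ?F = "\<lambda>t. ?cB ^ t * (64^3)^(N-t)"
  have Fne: "?F t \<noteq> ?F t'" if "t \<le> N" "t' \<le> N" "t \<noteq> t'" for t t'
  proof (cases "t < t'")
    case True
    then show ?thesis using chain_strict[OF B_pos B_lt True that(2)] by simp
  next
    case False
    then have "t' < t" using that by simp
    then show ?thesis using chain_strict[OF B_pos B_lt \<open>t' < t\<close> that(1)] by simp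
  qed
  have inj: "inj_on (Mt N) {..N}"
  proof (rule inj_onI)
    fix t t' assume t: "t \<in> {..N}" and t': "t' \<in> {..N}" and e: "Mt N t = Mt N t'"
    show "t = t'"
    proof (rule ccontr)
      assume "t \<noteq> t'"
      then have "?F t \<noteq> ?F t'" using Fne t t' by simp
      moreover have "?F t = ?F t'" using Mt_props[of t N] Mt_props[of t' N] t t' e by simp
      ultimately show False by simp
    qed
  qed
  let ?S = "Mt N ` {..N}"
  show "\<exists>m S. finite S \<and> card S \<ge> N \<and>
           (\<forall>H\<in>S. hadamard (4^m) H \<and> graphical (4^m) H \<and> regular (4^m) H) \<and>
           (\<forall>H\<in>S. \<forall>K\<in>S. H \<noteq> K \<longrightarrow> \<not> hadamard_equiv (4^m) H K)"
  proof (intro exI[of _ "3*N"] exI[of _ ?S] conjI ballI impI)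
    show "finite ?S" by simp
    show "card ?S \<ge> N" using card_image[OF inj] by simp
  next
    fix H assume "H \<in> ?S"
    then obtain t where "t \<le> N" "H = Mt N t" by auto
    then show "hadamard (4^(3*N)) H" "graphical (4^(3*N)) H" "regular (4^(3*N)) H"
      using Mt_props by auto
  next
    fix H K assume H: "H \<in> ?S" and K: "K \<in> ?S" and ne: "H \<noteq> K"
    obtain t where t: "t \<le> N" "H = Mt N t" using H by auto
    obtain t' where t': "t' \<le> N" "K = Mt N t'" using K by auto
    have "t \<noteq> t'" using t t' ne by auto
    then have Fd: "?F t \<noteq> ?F t'" using Fne t t' by simp
    show "\<not> hadamard_equiv (4^(3*N)) H K"
    proof
      assume "hadamard_equiv (4^(3*N)) H K"
      then have "fourc (4^(3*N)) K = fourc (4^(3*N)) H" by (rule fourc_equiv)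
      then have "?F t' = ?F t" using Mt_props[OF t(1)] Mt_props[OF t'(1)] t t' by simp
      then show False using Fd by simp
    qed
  qed
qed

end
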